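(* Let $\Omega\subset\mathbb{R}^d$ ($d=1,2$) be a rectangular domain with periodic boundary conditions, $\varepsilon>0$, $\tau>0$ a time step, and $(f,g)=\int_\Omega f\bar g\,d{\bf x}$. Let $b_i,a_{ij}$ ($i,j=1,\dots,s$) be real numbers satisfying \[ b_ia_{ij}+b_ja_{ji}=b_ib_j\quad\text{for all } i,j=1,\dots,s. \] Consider the semi-discrete $s$-stage Runge–Kutta scheme: given periodic functions $E^n$ (complex-valued) and $N^n,v^n,q^n$ (real-valued), the stage values satisfy, for $i=1,\dots,s$, \[ \begin{aligned} &E_{ni}=E^n+\tau\sum_{j=1}^s a_{ij}k_j^1,\quad k_i^1={\rm i}\big(\Delta E_{ni}-\varepsilon^2\Delta^2E_{ni}-N_{ni}E_{ni}\big),\\ &N_{ni}=N^n+\tau\sum_{j=1}^s a_{ij}k_j^2,\quad k_i^2=\Delta v_{ni},\\ &v_{ni}=v^n+\tau\sum_{j=1}^s a_{ij}k_j^3,\quad k_i^3=N_{ni}-\varepsilon^2\Delta N_{ni}+Q_{ni},\\ &Q_{ni}=q^n+\tau\sum_{j=1}^s a_{ij}k_j^4,\quad k_i^4=2\,{\rm Re}\big(\bar E_{ni}\,k_i^1\big), \end{aligned} \] and the update is $E^{n+1}=E^n+\tau\sum_i b_ik_i^1$, $N^{n+1}=N^n+\tau\sum_i b_ik_i^2$, $v^{n+1}=v^n+\tau\sum_i b_ik_i^3$, $q^{n+1}=q^n+\tau\sum_i b_ik_i^4$, with initial data satisfying $q^0=|E^0|^2$. Assume the stage equations are solvable at every step.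 Then for all $n\ge0$: (i) $\mathcal{M}^{n+1}=\mathcal{M}^n$, where $\mathcal{M}^n=(|E^n|^2,1)$; (ii) $q^n-|E^n|^2=0$; (iii) $\mathcal{E}^{n+1}=\mathcal{E}^n$, where \[ \mathcal{E}^n=(\Delta E^n,E^n)-\varepsilon^2(\Delta E^n,\Delta E^n)-\tfrac12(N^n,N^n)+\tfrac{\varepsilon^2}{2}(\Delta N^n,N^n)-(N^n,q^n)+\tfrac12(\Delta v^n,v^n). \]
   Context: This is the Runge–Kutta time discretization of the system $E_t={\rm i}(\Delta E-\varepsilon^2\Delta^2E-NE)$, $N_t=\Delta v$, $v_t=N-\varepsilon^2\Delta N+q$, $q_t=2{\rm Re}(E_t\bar E)$ (a reformulation of the quantum Zakharov system with $q=|E|^2$). The condition on $b_i,a_{ij}$ is the symplecticity condition for Runge–Kutta methods (satisfied e.g. by Gauss methods). *)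

theory Defs
  imports "HOL-Analysis.Analysis"
begin

definition pd :: "'n::finite \<Rightarrow> (real^'n \<Rightarrow> 'b::real_normed_vector) \<Rightarrow> real^'n \<Rightarrow> 'b" where
  "pd k f x = vector_derivative (\<lambda>t. f (x + t *\<^sub>R axis k 1)) (at 0)"

definition lap :: "(real^'n::finite \<Rightarrow> 'b::real_normed_vector) \<Rightarrow> real^'n \<Rightarrow> 'b" where
  "lap f = (\<lambda>x. \<Sum>k\<in>UNIV. pd k (pd k f) x)"

fun iter_pd :: "'n::finite list \<Rightarrow> (real^'n \<Rightarrow> 'b::real_normed_vector) \<Rightarrow> real^'n \<Rightarrow> 'b" where
  "iter_pd [] f = f"
| "iter_pd (k # ks) f = pd k (iter_pd ks f)"

definition smooth_fn :: "(real^'n::finite \<Rightarrow> 'b::real_normed_vector) \<Rightarrow> bool" where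
  "smooth_fn f \<longleftrightarrow> (\<forall>ks. continuous_on UNIV (iter_pd ks f) \<and>
      (\<forall>k x. (\<lambda>t. iter_pd ks f (x + t *\<^sub>R axis k 1)) differentiable (at 0)))"

definition periodic_fn :: "real^'n::finite \<Rightarrow> (real^'n \<Rightarrow> 'b) \<Rightarrow> bool" where
  "periodic_fn L f \<longleftrightarrow> (\<forall>k x. f (x + (L$k) *\<^sub>R axis k 1) = f x)"

definition admissible :: "real^'n::finite \<Rightarrow> (real^'n \<Rightarrow> 'b::real_normed_vector) \<Rightarrow> bool" where
  "admissible L f \<longleftrightarrow> smooth_fn f \<and> periodic_fn L f"

definition ipc :: "real^'n::finite \<Rightarrow> (real^'n \<Rightarrow> complex) \<Rightarrow> (real^'n \<Rightarrow> complex) \<Rightarrow> complex" where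
  "ipc L f g = integral (cbox 0 L) (\<lambda>x. f x * cnj (g x))"

definition ipr :: "real^'n::finite \<Rightarrow> (real^'n \<Rightarrow> real) \<Rightarrow> (real^'n \<Rightarrow> real) \<Rightarrow> real" where
  "ipr L f g = integral (cbox 0 L) (\<lambda>x. f x * g x)"

definition K1 :: "real \<Rightarrow> (real^'n::finite \<Rightarrow> complex) \<Rightarrow> (real^'n \<Rightarrow> real) \<Rightarrow> real^'n \<Rightarrow> complex" where
  "K1 \<epsilon> E N = (\<lambda>x. \<i> * (lap E x - complex_of_real (\<epsilon>^2) * lap (lap E) x - complex_of_real (N x) * E x))"

definition K2 :: "(real^'n::finite \<Rightarrow> real) \<Rightarrow> real^'n \<Rightarrow> real" where
  "K2 v = lap v"

definition K3 :: "real \<Rightarrow> (real^'n::finite \<Rightarrow> real) \<Rightarrow> (real^'n \<Rightarrow> real) \<Rightarrow> real^'n \<Rightarrow> real" where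
  "K3 \<epsilon> N Q = (\<lambda>x. N x - \<epsilon>^2 * lap N x + Q x)"

definition K4 :: "real \<Rightarrow> (real^'n::finite \<Rightarrow> complex) \<Rightarrow> (real^'n \<Rightarrow> real) \<Rightarrow> real^'n \<Rightarrow> real" where
  "K4 \<epsilon> E N = (\<lambda>x. 2 * Re (cnj (E x) * K1 \<epsilon> E N x))"

definition mass :: "real^'n::finite \<Rightarrow> (real^'n \<Rightarrow> complex) \<Rightarrow> complex" where
  "mass L E = ipc L (\<lambda>x. complex_of_real ((cmod (E x))^2)) (\<lambda>x. 1)"

definition energy :: "real \<Rightarrow> real^'n::finite \<Rightarrow> (real^'n \<Rightarrow> complex) \<Rightarrow> (real^'n \<Rightarrow> real)
    \<Rightarrow> (real^'n \<Rightarrow> real) \<Rightarrow> (real^'n \<Rightarrow> real) \<Rightarrow> complex" where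
  "energy \<epsilon> L E N v q =
     ipc L (lap E) E - complex_of_real (\<epsilon>^2) * ipc L (lap E) (lap E)
     - complex_of_real (1/2 * ipr L N N) + complex_of_real (\<epsilon>^2/2 * ipr L (lap N) N)
     - complex_of_real (ipr L N q) + complex_of_real (1/2 * ipr L (lap v) v)"

end

theory Submission
  imports Defs
begin

definition dd :: "'n::finite \<Rightarrow> (real^'n \<Rightarrow> 'b::real_normed_vector) \<Rightarrow> real^'n \<Rightarrow> bool" where
  "dd k f x \<longleftrightarrow> (\<lambda>t. f (x + t *\<^sub>R axis k 1)) differentiable (at 0)"

lemma pd_has: "dd k f x \<Longrightarrow> ((\<lambda>t. f (x + t *\<^sub>R axis k 1)) has_vector_derivative pd k f x) (at 0)"
  unfolding dd_def pd_def by (simp add: vector_derivative_works)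

lemma pd_eqI: "((\<lambda>t. f (x + t *\<^sub>R axis k 1)) has_vector_derivative D) (at 0) \<Longrightarrow> pd k f x = D"
  unfolding pd_def by (rule vector_derivative_at)

lemma ddI: "((\<lambda>t. f (x + t *\<^sub>R axis k 1)) has_vector_derivative D) (at 0) \<Longrightarrow> dd k f x"
  unfolding dd_def by (rule differentiableI_vector)

lemma pd_add:
  assumes "dd k f x" "dd k g x"
  shows "pd k (\<lambda>y. f y + g y) x = pd k f x + pd k g x" "dd k (\<lambda>y. f y + g y) x"
  using has_vector_derivative_add[OF pd_has[OF assms(1)] pd_has[OF assms(2)]]
  by (auto intro: pd_eqI ddI)

lemma pd_lin:
  assumes "bounded_linear \<phi>" "dd k f x"
  shows "pd k (\<lambda>y. \<phi> (f y)) x = \<phi> (pd k f x)" "dd k (\<lambda>y. \<phi> (f y)) x"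
  using bounded_linear.has_vector_derivative[OF assms(1) pd_has[OF assms(2)]]
  by (auto intro: pd_eqI ddI)

lemma pd_mult:
  fixes f g :: "real^'n::finite \<Rightarrow> 'b::real_normed_algebra"
  assumes "dd k f x" "dd k g x"
  shows "pd k (\<lambda>y. f y * g y) x = f x * pd k g x + pd k f x * g x" "dd k (\<lambda>y. f y * g y) x"
  using has_vector_derivative_mult[OF pd_has[OF assms(1)] pd_has[OF assms(2)]]
  by (auto intro: pd_eqI ddI)

lemma pd_const: "pd k (\<lambda>y. c) x = 0" "dd k (\<lambda>y. c) x"
  by (auto intro: pd_eqI simp: dd_def)

lemma smooth_cont: "smooth_fn f \<Longrightarrow> continuous_on UNIV (iter_pd ks f)"
  unfolding smooth_fn_def by blast

lemma smooth_dd: "smooth_fn f \<Longrightarrow> dd k (iter_pd ks f) x"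
  unfolding smooth_fn_def dd_def by blast

lemma smoothI: "(\<And>ks. continuous_on UNIV (iter_pd ks f)) \<Longrightarrow> (\<And>ks k x. dd k (iter_pd ks f) x) \<Longrightarrow> smooth_fn f"
  unfolding smooth_fn_def dd_def by blast

lemma iter_pd_add:
  assumes "smooth_fn f" "smooth_fn g"
  shows "iter_pd ks (\<lambda>x. f x + g x) = (\<lambda>x. iter_pd ks f x + iter_pd ks g x)"
proof (induction ks)
  case Nil then show ?case by simp
next
  case (Cons k ks)
  show ?case using pd_add(1)[OF smooth_dd[OF assms(1)] smooth_dd[OF assms(2)]]
    by (simp add: Cons)
qed

lemma smooth_add: "smooth_fn f \<Longrightarrow> smooth_fn g \<Longrightarrow> smooth_fn (\<lambda>x. f x + g x)"
  apply (rule smoothI)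
   apply (simp add: iter_pd_add continuous_on_add smooth_cont)
  apply (simp add: iter_pd_add pd_add(2) smooth_dd)
  done

lemma iter_pd_lin:
  assumes "bounded_linear \<phi>" "smooth_fn f"
  shows "iter_pd ks (\<lambda>x. \<phi> (f x)) = (\<lambda>x. \<phi> (iter_pd ks f x))"
proof (induction ks)
  case Nil then show ?case by simp
next
  case (Cons k ks)
  show ?case using pd_lin(1)[OF assms(1) smooth_dd[OF assms(2)]]
    by (simp add: Cons)
qed

lemma smooth_lin: "bounded_linear \<phi> \<Longrightarrow> smooth_fn f \<Longrightarrow> smooth_fn (\<lambda>x. \<phi> (f x))"
  apply (rule smoothI)
   apply (simp add: iter_pd_lin)
   apply (rule continuous_on_compose2[OF linear_continuous_on[of _ UNIV] smooth_cont], assumption+, simp)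
  apply (simp add: iter_pd_lin pd_lin(2) smooth_dd)
  done

lemma pd_iter: "pd k (iter_pd ks f) = iter_pd (k # ks) f" by simp

lemma smooth_pd: "smooth_fn f \<Longrightarrow> smooth_fn (pd k f)"
proof (rule smoothI)
  have *: "iter_pd ks (pd k f) = iter_pd (ks @ [k]) f" for ks
    by (induction ks) auto
  show "continuous_on UNIV (iter_pd ks (pd k f))" if "smooth_fn f" for ks
    using that by (simp add: * smooth_cont)
  show "dd j (iter_pd ks (pd k f)) x" if "smooth_fn f" for ks j x
    using that by (simp add: * smooth_dd)
qed

inductive_set Wp :: "(real^'n::finite \<Rightarrow> 'b::real_normed_algebra) \<Rightarrow> (real^'n \<Rightarrow> 'b) \<Rightarrow> (real^'n \<Rightarrow> 'b) set"
  for f g where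
  base: "(\<lambda>x. iter_pd A f x * iter_pd B g x) \<in> Wp f g"
| plus: "h1 \<in> Wp f g \<Longrightarrow> h2 \<in> Wp f g \<Longrightarrow> (\<lambda>x. h1 x + h2 x) \<in> Wp f g"

lemma Wp_props:
  assumes f: "smooth_fn f" and g: "smooth_fn g" and h: "h \<in> Wp f g"
  shows "continuous_on UNIV h \<and> (\<forall>k x. dd k h x) \<and> (\<forall>k. pd k h \<in> Wp f g)"
  using h
proof induction
  case (base A B)
  have c: "continuous_on UNIV (\<lambda>x. iter_pd A f x * iter_pd B g x)"
    by (intro continuous_on_mult smooth_cont f g)
  have d: "\<forall>k x. dd k (\<lambda>x. iter_pd A f x * iter_pd B g x) x"
    by (intro allI pd_mult(2) smooth_dd f g)
  have e: "pd k (\<lambda>x. iter_pd A f x * iter_pd B g x) \<in> Wp f g" for k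
  proof -
    have "pd k (\<lambda>x. iter_pd A f x * iter_pd B g x) =
      (\<lambda>x. (\<lambda>x. iter_pd A f x * iter_pd (k#B) g x) x + (\<lambda>x. iter_pd (k#A) f x * iter_pd B g x) x)"
      by (rule ext, simp add: pd_mult(1) smooth_dd f g)
    then show ?thesis by (simp only: Wp.plus Wp.base)
  qed
  show ?case using c d e by blast
next
  case (plus h1 h2)
  have "pd k (\<lambda>x. h1 x + h2 x) = (\<lambda>x. pd k h1 x + pd k h2 x)" for k
    using plus by (intro ext pd_add(1)) auto
  then show ?case using plus by (auto intro: continuous_on_add pd_add(2) Wp.plus)
qed

lemma smooth_mult:
  fixes f g :: "real^'n::finite \<Rightarrow> 'b::real_normed_algebra"
  assumes f: "smooth_fn f" and g: "smooth_fn g"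
  shows "smooth_fn (\<lambda>x. f x * g x)"
proof -
  have "iter_pd ks (\<lambda>x. f x * g x) \<in> Wp f g" for ks
  proof (induction ks)
    case Nil
    show ?case using Wp.base[of "[]" f "[]" g] by simp
  next
    case (Cons k ks)
    then show ?case using Wp_props[OF f g Cons] by simp
  qed
  then show ?thesis using Wp_props[OF f g] by (auto intro: smoothI)
qed

lemma smooth_const: "smooth_fn (\<lambda>x. c)"
proof -
  have *: "iter_pd ks (\<lambda>x. c) = (\<lambda>x. if ks = [] then c else 0)" for ks
    by (induction ks) (auto simp: pd_const)
  show ?thesis
    by (intro smoothI; case_tac "ks = []") (auto simp: pd_const *)
qed

lemma smooth_dd0: "smooth_fn f \<Longrightarrow> dd k f x"
  using smooth_dd[where ks="[]"] by simp
lemma smooth_cont0: "smooth_fn f \<Longrightarrow> continuous_on UNIV f"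
  using smooth_cont[where ks="[]"] by simp

lemma per_pd:
  assumes P: "periodic_fn L f"
  shows "periodic_fn L (pd k f)"
  unfolding periodic_fn_def
proof (intro allI)
  fix j x
  have "(\<lambda>t. f (x + (L$j) *\<^sub>R axis j 1 + t *\<^sub>R axis k 1)) = (\<lambda>t. f (x + t *\<^sub>R axis k 1))"
  proof
    fix t
    show "f (x + (L$j) *\<^sub>R axis j 1 + t *\<^sub>R axis k 1) = f (x + t *\<^sub>R axis k 1)"
      using P unfolding periodic_fn_def
      by (metis (no_types, lifting) add.assoc add.commute)
  qed
  then show "pd k f (x + (L$j) *\<^sub>R axis j 1) = pd k f x"
    unfolding pd_def by simp
qed

lemma cont_int: "continuous_on UNIV f \<Longrightarrow> (f::real^'n::finite \<Rightarrow> 'b::banach) integrable_on cbox a b"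
  by (rule integrable_continuous, erule continuous_on_subset, simp)

lemma int_translate:
  fixes g :: "real^'n::finite \<Rightarrow> 'b::banach"
  assumes "continuous_on UNIV g"
  shows "integral (cbox a b) (\<lambda>x. g (x + c)) = integral (cbox (a+c) (b+c)) g"
proof -
  have "(g has_integral integral (cbox (a+c) (b+c)) g) (cbox (a+c) (b+c))"
    using cont_int[OF assms] by (rule integrable_integral)
  then have "((g \<circ> (+) c) has_integral integral (cbox (a+c) (b+c)) g) (cbox a b)"
    by (simp add: has_integral_shift_cbox_iff)
  then show ?thesis by (simp add: o_def add.commute integral_unique)
qed

lemma vec_axis_nth: "(t *\<^sub>R axis k (1::real)) $ i = (if i = k then t else 0)"
  by (simp add: axis_def)

lemma period_shift:
  fixes g :: "real^'n::finite \<Rightarrow> 'b::banach" and L :: "real^'n"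
  assumes cg: "continuous_on UNIV g"
    and per: "\<And>x. g (x + (L$k) *\<^sub>R axis k 1) = g x"
    and Lpos: "\<And>i. L$i > 0" and t: "0 \<le> t" "t \<le> L$k"
  shows "integral (cbox 0 L) (\<lambda>x. g (x + t *\<^sub>R axis k 1)) = integral (cbox 0 L) g"
proof -
  define e :: "real^'n" where "e = axis k 1"
  define Lt :: "real^'n" where "Lt = (\<chi> i. if i = k then t else L$i)"
  have eB: "e \<in> Basis" unfolding e_def by (simp add: axis_in_Basis_iff)
  have inner: "x \<bullet> e = x $ k" for x :: "real^'n" unfolding e_def by (simp add: inner_axis)
  have int: "g integrable_on cbox a b" for a b by (rule cont_int[OF cg])
  have "integral (cbox 0 L) (\<lambda>x. g (x + t *\<^sub>R e)) = integral (cbox (t *\<^sub>R e) (L + t *\<^sub>R e)) g"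
    using int_translate[OF cg, of 0 L "t *\<^sub>R e"] by simp
  also have "\<dots> = integral (cbox (t *\<^sub>R e) (L + t *\<^sub>R e) \<inter> {x. x \<bullet> e \<le> L$k}) g
      + integral (cbox (t *\<^sub>R e) (L + t *\<^sub>R e) \<inter> {x. x \<bullet> e \<ge> L$k}) g"
    by (rule integral_split[OF int eB])
  also have "cbox (t *\<^sub>R e) (L + t *\<^sub>R e) \<inter> {x. x \<bullet> e \<le> L$k} = cbox (t *\<^sub>R e) L"
    unfolding inner interval_split_cart[unfolded interval_cbox_cart]
    using t by (intro arg_cong2[where f=cbox]) (auto simp: e_def Lt_def vec_eq_iff axis_def)
  also have "cbox (t *\<^sub>R e) (L + t *\<^sub>R e) \<inter> {x. x \<bullet> e \<ge> L$k} = cbox (0 + (L$k) *\<^sub>R e) (Lt + (L$k) *\<^sub>R e)"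
    unfolding inner interval_split_cart[unfolded interval_cbox_cart]
    using t by (intro arg_cong2[where f=cbox]) (auto simp: e_def Lt_def vec_eq_iff axis_def)
  also have "integral (cbox (0 + (L$k) *\<^sub>R e) (Lt + (L$k) *\<^sub>R e)) g
      = integral (cbox 0 Lt) (\<lambda>x. g (x + (L$k) *\<^sub>R e))"
    using int_translate[OF cg, of 0 Lt "(L$k) *\<^sub>R e"] by simp
  also have "\<dots> = integral (cbox 0 Lt) g"
    using per unfolding e_def by simp
  finally have A: "integral (cbox 0 L) (\<lambda>x. g (x + t *\<^sub>R e)) = integral (cbox (t *\<^sub>R e) L) g + integral (cbox 0 Lt) g" .
  have "integral (cbox 0 L) g = integral (cbox 0 L \<inter> {x. x \<bullet> e \<le> t}) g
      + integral (cbox 0 L \<inter> {x. x \<bullet> e \<ge> t}) g"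
    by (rule integral_split[OF int eB])
  also have "cbox 0 L \<inter> {x. x \<bullet> e \<le> t} = cbox 0 Lt"
    unfolding inner interval_split_cart[unfolded interval_cbox_cart]
    using t by (intro arg_cong2[where f=cbox]) (auto simp: e_def Lt_def vec_eq_iff axis_def)
  also have "cbox 0 L \<inter> {x. x \<bullet> e \<ge> t} = cbox (t *\<^sub>R e) L"
    unfolding inner interval_split_cart[unfolded interval_cbox_cart]
    using t by (intro arg_cong2[where f=cbox]) (auto simp: e_def Lt_def vec_eq_iff axis_def)
  finally show ?thesis using A unfolding e_def by (simp add: add.commute)
qed

lemma shift_deriv:
  assumes "dd k h (x + t *\<^sub>R axis k 1)"
  shows "((\<lambda>s. h (x + s *\<^sub>R axis k 1)) has_vector_derivative pd k h (x + t *\<^sub>R axis k 1)) (at t)"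
proof -
  have d1: "((\<lambda>s. s - t) has_vector_derivative 1) (at t)"
    by (auto intro!: derivative_eq_intros)
  have d2: "((\<lambda>u. h ((x + t *\<^sub>R axis k 1) + u *\<^sub>R axis k 1)) has_vector_derivative pd k h (x + t *\<^sub>R axis k 1)) (at ((\<lambda>s. s - t) t))"
    using pd_has[OF assms] by simp
  have "((\<lambda>u. h ((x + t *\<^sub>R axis k 1) + u *\<^sub>R axis k 1)) \<circ> (\<lambda>s. s - t)) = (\<lambda>s. h (x + s *\<^sub>R axis k 1))"
    by (rule ext) (simp add: algebra_simps)
  then show ?thesis using vector_diff_chain_at[OF d1 d2] by simp
qed

lemma int_pd_zero:
  fixes h :: "real^'n::finite \<Rightarrow> 'b::banach" and L :: "real^'n"
  assumes ch: "continuous_on UNIV h" and cpd: "continuous_on UNIV (pd k h)"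
    and dh: "\<And>x. dd k h x" and per: "periodic_fn L h"
    and Lpos: "\<And>i. L$i > 0"
  shows "integral (cbox 0 L) (pd k h) = 0"
proof -
  define e :: "real^'n" where "e = axis k 1"
  define \<phi> where "\<phi> t = integral (cbox 0 L) (\<lambda>x. h (x + t *\<^sub>R e))" for t
  define U where "U = {0<..<L$k}"
  define t0 where "t0 = L$k / 2"
  have t0U: "t0 \<in> U" using Lpos[of k] by (simp add: U_def t0_def)
  have oU: "open U" by (simp add: U_def)
  have der: "(\<phi> has_vector_derivative integral (cbox 0 L) (\<lambda>x. pd k h (x + t0 *\<^sub>R e))) (at t0 within U)"
    unfolding \<phi>_def
  proof (rule leibniz_rule_vector_derivative[where fx="\<lambda>t x. pd k h (x + t *\<^sub>R e)"])
    show "((\<lambda>t. h (x + t *\<^sub>R e)) has_vector_derivative pd k h (x + t *\<^sub>R e)) (at t within U)" for t x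
      unfolding e_def by (rule has_vector_derivative_at_within, rule shift_deriv, rule dh)
    show "(\<lambda>x. h (x + t *\<^sub>R e)) integrable_on cbox 0 L" for t
      by (rule cont_int, rule continuous_on_compose2[OF ch]) (auto intro!: continuous_intros)
    show "continuous_on (U \<times> cbox 0 L) (\<lambda>(t, x). pd k h (x + t *\<^sub>R e))"
    proof -
      have "continuous_on (U \<times> cbox 0 L) (\<lambda>p. pd k h (snd p + fst p *\<^sub>R e))"
        by (rule continuous_on_compose2[OF cpd]) (auto intro!: continuous_intros)
      then show ?thesis by (simp add: case_prod_beta)
    qed
    show "t0 \<in> U" by (rule t0U)
    show "convex U" by (simp add: U_def)
  qed
  then have der': "(\<phi> has_vector_derivative integral (cbox 0 L) (\<lambda>x. pd k h (x + t0 *\<^sub>R e))) (at t0)"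
    by (rule has_vector_derivative_within_open[OF t0U oU, THEN iffD1])
  have perk: "\<And>x. h (x + (L$k) *\<^sub>R axis k 1) = h x" using per unfolding periodic_fn_def by blast
  have const: "\<phi> t = integral (cbox 0 L) h" if "t \<in> U" for t
    unfolding \<phi>_def e_def using that
    by (intro period_shift[OF ch perk Lpos]) (auto simp: U_def)
  have der0: "(\<phi> has_vector_derivative 0) (at t0)"
    by (rule has_vector_derivative_transform_within_open[OF has_vector_derivative_const oU t0U])
       (simp add: const)
  have z: "integral (cbox 0 L) (\<lambda>x. pd k h (x + t0 *\<^sub>R e)) = 0"
    using vector_derivative_unique_at[OF der' der0] .
  have perk': "\<And>x. pd k h (x + (L$k) *\<^sub>R axis k 1) = pd k h x"
    using per_pd[OF per] unfolding periodic_fn_def by blast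
  have "integral (cbox 0 L) (\<lambda>x. pd k h (x + t0 *\<^sub>R e)) = integral (cbox 0 L) (pd k h)"
    unfolding e_def using t0U
    by (intro period_shift[OF cpd perk' Lpos]) (auto simp: U_def)
  then show ?thesis using z by simp
qed

lemma adm_smooth: "admissible L f \<Longrightarrow> smooth_fn f" unfolding admissible_def by blast
lemma adm_per: "admissible L f \<Longrightarrow> periodic_fn L f" unfolding admissible_def by blast
lemma adm_cont: "admissible L f \<Longrightarrow> continuous_on UNIV f" by (rule smooth_cont0[OF adm_smooth])
lemma adm_int: "admissible L f \<Longrightarrow> f integrable_on cbox a b"
  for f :: "real^'n::finite \<Rightarrow> 'b::banach"
  by (rule cont_int[OF adm_cont])

lemma adm_add: "admissible L f \<Longrightarrow> admissible L g \<Longrightarrow> admissible L (\<lambda>x. f x + g x)"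
  unfolding admissible_def periodic_fn_def by (auto intro: smooth_add)

lemma adm_lin: "bounded_linear \<phi> \<Longrightarrow> admissible L f \<Longrightarrow> admissible L (\<lambda>x. \<phi> (f x))"
  unfolding admissible_def periodic_fn_def by (auto intro: smooth_lin)

lemma adm_mult: "admissible L f \<Longrightarrow> admissible L g \<Longrightarrow> admissible L (\<lambda>x. f x * g x)"
  for f g :: "real^'n::finite \<Rightarrow> 'b::real_normed_algebra"
  unfolding admissible_def periodic_fn_def by (auto intro: smooth_mult)

lemma adm_const: "admissible L (\<lambda>x. c)"
  unfolding admissible_def periodic_fn_def by (auto intro: smooth_const)

lemma adm_pd: "admissible L f \<Longrightarrow> admissible L (pd k f)"
  unfolding admissible_def by (auto intro: smooth_pd per_pd)

lemma adm_sum: "finite A \<Longrightarrow> (\<And>i. i \<in> A \<Longrightarrow> admissible L (f i)) \<Longrightarrow> admissible L (\<lambda>x. \<Sum>i\<in>A. f i x)"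
  by (induction A rule: finite_induct) (auto intro: adm_add adm_const)

lemma adm_lap: "admissible L f \<Longrightarrow> admissible L (lap f)"
  unfolding lap_def by (intro adm_sum adm_pd) auto

lemma adm_uminus: "admissible L f \<Longrightarrow> admissible L (\<lambda>x. - f x)"
  by (rule adm_lin[OF bounded_linear_minus[OF bounded_linear_ident]])

lemma adm_diff: "admissible L f \<Longrightarrow> admissible L g \<Longrightarrow> admissible L (\<lambda>x. f x - g x)"
  using adm_add[OF _ adm_uminus, of L f g] by simp

lemma adm_cmult: "admissible L f \<Longrightarrow> admissible L (\<lambda>x. c * f x)"
  for f :: "real^'n::finite \<Rightarrow> 'b::real_normed_algebra"
  by (rule adm_lin[OF bounded_linear_mult_right])

lemma adm_scaleR: "admissible L f \<Longrightarrow> admissible L (\<lambda>x. c *\<^sub>R f x)"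
  by (rule adm_lin[OF bounded_linear_scaleR_right])

lemma adm_cnj: "admissible L f \<Longrightarrow> admissible L (\<lambda>x. cnj (f x))"
  by (rule adm_lin[OF bounded_linear_cnj])

lemma adm_of_real: "admissible L f \<Longrightarrow> admissible L (\<lambda>x. complex_of_real (f x))"
  by (rule adm_lin[OF bounded_linear_of_real])

lemma lap_add: "admissible L f \<Longrightarrow> admissible L g \<Longrightarrow> lap (\<lambda>x. f x + g x) = (\<lambda>x. lap f x + lap g x)"
  unfolding lap_def
  using iter_pd_add[OF adm_smooth adm_smooth, of L f L g "[k,k]" for k]
  by (simp add: sum.distrib fun_eq_iff)

lemma lap_lin:
  assumes "bounded_linear \<phi>" "admissible L f"
  shows "lap (\<lambda>x. \<phi> (f x)) = (\<lambda>x. \<phi> (lap f x))"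
proof -
  have l: "linear \<phi>" using assms(1) bounded_linear.linear by blast
  show ?thesis
    unfolding lap_def
    using iter_pd_lin[OF assms(1) adm_smooth[OF assms(2)], of "[k,k]" for k]
    by (simp add: fun_eq_iff linear_sum[OF l] o_def)
qed

lemma lap_scaleR: "admissible L f \<Longrightarrow> lap (\<lambda>x. c *\<^sub>R f x) = (\<lambda>x. c *\<^sub>R lap f x)"
  by (rule lap_lin[OF bounded_linear_scaleR_right])

lemma lap_cnj: "admissible L f \<Longrightarrow> lap (\<lambda>x. cnj (f x)) = (\<lambda>x. cnj (lap f x))"
  by (rule lap_lin[OF bounded_linear_cnj])

lemma lap_cmult: "admissible L f \<Longrightarrow> lap (\<lambda>x. c * f x) = (\<lambda>x. c * lap f x)"
  for f :: "real^'n::finite \<Rightarrow> 'b::real_normed_algebra"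
  by (rule lap_lin[OF bounded_linear_mult_right])

lemma lap_uminus: "admissible L f \<Longrightarrow> lap (\<lambda>x. - f x) = (\<lambda>x. - lap f x)"
  by (rule lap_lin[OF bounded_linear_minus[OF bounded_linear_ident]])

lemma lap_diff: "admissible L f \<Longrightarrow> admissible L g \<Longrightarrow> lap (\<lambda>x. f x - g x) = (\<lambda>x. lap f x - lap g x)"
  using lap_add[OF _ adm_uminus, of L f g] lap_uminus[of L g] by simp

lemma ibp1:
  fixes f g :: "real^'n::finite \<Rightarrow> 'b::{real_normed_field,banach}"
  assumes f: "admissible L f" and g: "admissible L g" and Lpos: "\<And>i. L$i > 0"
  shows "integral (cbox 0 L) (\<lambda>x. pd k f x * g x) = - integral (cbox 0 L) (\<lambda>x. f x * pd k g x)"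
proof -
  define h where "h = (\<lambda>x. f x * g x)"
  have ah: "admissible L h" unfolding h_def by (rule adm_mult[OF f g])
  have pdh: "pd k h = (\<lambda>x. f x * pd k g x + pd k f x * g x)"
    unfolding h_def by (rule ext, rule pd_mult(1)) (auto intro: smooth_dd0 adm_smooth f g)
  have "integral (cbox 0 L) (pd k h) = 0"
    by (rule int_pd_zero[OF adm_cont[OF ah] adm_cont[OF adm_pd[OF ah]] smooth_dd0[OF adm_smooth[OF ah]] adm_per[OF ah] Lpos])
  then have "integral (cbox 0 L) (\<lambda>x. f x * pd k g x) + integral (cbox 0 L) (\<lambda>x. pd k f x * g x) = 0"
    unfolding pdh
    by (subst integral_add[symmetric]) (auto intro!: adm_int adm_mult adm_pd f g)
  then show ?thesis by (simp add: eq_neg_iff_add_eq_0 add.commute)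
qed

lemma ibp_lap:
  fixes f g :: "real^'n::finite \<Rightarrow> 'b::{real_normed_field,banach}"
  assumes f: "admissible L f" and g: "admissible L g" and Lpos: "\<And>i. L$i > 0"
  shows "integral (cbox 0 L) (\<lambda>x. lap f x * g x) = integral (cbox 0 L) (\<lambda>x. f x * lap g x)"
proof -
  have "integral (cbox 0 L) (\<lambda>x. lap f x * g x) = (\<Sum>k\<in>UNIV. integral (cbox 0 L) (\<lambda>x. pd k (pd k f) x * g x))"
    unfolding lap_def sum_distrib_right
    by (rule integral_sum) (auto intro!: adm_int adm_mult adm_pd f g)
  also have "\<dots> = (\<Sum>k\<in>UNIV. integral (cbox 0 L) (\<lambda>x. f x * pd k (pd k g) x))"
  proof (rule sum.cong[OF refl])
    fix k
    show "integral (cbox 0 L) (\<lambda>x. pd k (pd k f) x * g x) = integral (cbox 0 L) (\<lambda>x. f x * pd k (pd k g) x)"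
      using ibp1[OF adm_pd[OF f] g Lpos, of k k] ibp1[OF f adm_pd[OF g] Lpos, of k k] by simp
  qed
  also have "\<dots> = integral (cbox 0 L) (\<lambda>x. f x * lap g x)"
    unfolding lap_def sum_distrib_left
    by (rule integral_sum[symmetric]) (auto intro!: adm_int adm_mult adm_pd f g)
  finally show ?thesis .
qed

lemma rk_alg:
  fixes M :: "nat \<Rightarrow> nat \<Rightarrow> 'w::real_vector" and u w :: "nat \<Rightarrow> 'w"
  assumes sympl: "\<forall>i\<in>{1..s}. \<forall>j\<in>{1..s}. b i * a i j + b j * a j i = b i * b j"
  shows "\<tau> *\<^sub>R (\<Sum>i=1..s. b i *\<^sub>R u i) + \<tau> *\<^sub>R (\<Sum>i=1..s. b i *\<^sub>R w i)
     + (\<tau>*\<tau>) *\<^sub>R (\<Sum>i=1..s. \<Sum>j=1..s. (b i * b j) *\<^sub>R M i j)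
   = \<tau> *\<^sub>R (\<Sum>i=1..s. b i *\<^sub>R ((u i + \<tau> *\<^sub>R (\<Sum>j=1..s. a i j *\<^sub>R M j i))
        + (w i + \<tau> *\<^sub>R (\<Sum>j=1..s. a i j *\<^sub>R M i j))))"
proof -
  have sw: "(\<Sum>i=1..s. \<Sum>j=1..s. (b i * a i j) *\<^sub>R M j i) = (\<Sum>i=1..s. \<Sum>j=1..s. (b j * a j i) *\<^sub>R M i j)"
    by (rule sum.swap)
  have "(\<Sum>i=1..s. \<Sum>j=1..s. (b i * b j) *\<^sub>R M i j)
      = (\<Sum>i=1..s. \<Sum>j=1..s. (b i * a i j + b j * a j i) *\<^sub>R M i j)"
    using sympl by (intro sum.cong refl) auto
  also have "\<dots> = (\<Sum>i=1..s. \<Sum>j=1..s. (b i * a i j) *\<^sub>R M i j) + (\<Sum>i=1..s. \<Sum>j=1..s. (b j * a j i) *\<^sub>R M i j)"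
    by (simp add: scaleR_add_left sum.distrib)
  finally have key: "(\<Sum>i=1..s. \<Sum>j=1..s. (b i * b j) *\<^sub>R M i j)
      = (\<Sum>i=1..s. \<Sum>j=1..s. (b i * a i j) *\<^sub>R M i j) + (\<Sum>i=1..s. \<Sum>j=1..s. (b i * a i j) *\<^sub>R M j i)"
    using sw by simp
  have key2: "(\<tau>*\<tau>) *\<^sub>R (\<Sum>i=1..s. \<Sum>j=1..s. (b i * b j) *\<^sub>R M i j)
      = (\<tau>*\<tau>) *\<^sub>R (\<Sum>i=1..s. \<Sum>j=1..s. (b i * a i j) *\<^sub>R M i j) + (\<tau>*\<tau>) *\<^sub>R (\<Sum>i=1..s. \<Sum>j=1..s. (b i * a i j) *\<^sub>R M j i)"
    using key by (simp add: scaleR_add_right)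
  show ?thesis using key2
    by (simp add: scaleR_add_right sum.distrib scaleR_sum_right scaleR_add_left algebra_simps)
qed

lemma rk_bil:
  fixes B :: "('a \<Rightarrow> 'b::real_vector) \<Rightarrow> ('a \<Rightarrow> 'c::real_vector) \<Rightarrow> 'w::real_vector"
    and s :: nat and a :: "nat \<Rightarrow> nat \<Rightarrow> real" and b :: "nat \<Rightarrow> real"
  assumes Sxa: "\<And>f g. f \<in> Sx \<Longrightarrow> g \<in> Sx \<Longrightarrow> (\<lambda>x. f x + g x) \<in> Sx"
    and Sxs: "\<And>c f. f \<in> Sx \<Longrightarrow> (\<lambda>x. c *\<^sub>R f x) \<in> Sx"
    and Sx0: "(\<lambda>x. 0) \<in> Sx"
    and Sya: "\<And>f g. f \<in> Sy \<Longrightarrow> g \<in> Sy \<Longrightarrow> (\<lambda>x. f x + g x) \<in> Sy"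
    and Sys: "\<And>c f. f \<in> Sy \<Longrightarrow> (\<lambda>x. c *\<^sub>R f x) \<in> Sy"
    and Sy0: "(\<lambda>x. 0) \<in> Sy"
    and Ba1: "\<And>f g h. f \<in> Sx \<Longrightarrow> g \<in> Sx \<Longrightarrow> h \<in> Sy \<Longrightarrow> B (\<lambda>x. f x + g x) h = B f h + B g h"
    and Bs1: "\<And>c f h. f \<in> Sx \<Longrightarrow> h \<in> Sy \<Longrightarrow> B (\<lambda>x. c *\<^sub>R f x) h = c *\<^sub>R B f h"
    and Ba2: "\<And>f g h. h \<in> Sx \<Longrightarrow> f \<in> Sy \<Longrightarrow> g \<in> Sy \<Longrightarrow> B h (\<lambda>x. f x + g x) = B h f + B h g"
    and Bs2: "\<And>c f h. h \<in> Sx \<Longrightarrow> f \<in> Sy \<Longrightarrow> B h (\<lambda>x. c *\<^sub>R f x) = c *\<^sub>R B h f"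
    and ya: "ya \<in> Sx" and za: "za \<in> Sy"
    and k: "\<And>i. i \<in> {1..s} \<Longrightarrow> k i \<in> Sx" and l: "\<And>i. i \<in> {1..s} \<Longrightarrow> l i \<in> Sy"
    and sympl: "\<forall>i\<in>{1..s}. \<forall>j\<in>{1..s}. b i * a i j + b j * a j i = b i * b j"
    and Y: "\<And>i. i \<in> {1..s} \<Longrightarrow> Y i = (\<lambda>x. ya x + \<tau> *\<^sub>R (\<Sum>j=1..s. a i j *\<^sub>R k j x))"
    and Z: "\<And>i. i \<in> {1..s} \<Longrightarrow> Z i = (\<lambda>x. za x + \<tau> *\<^sub>R (\<Sum>j=1..s. a i j *\<^sub>R l j x))"
    and yb: "yb = (\<lambda>x. ya x + \<tau> *\<^sub>R (\<Sum>i=1..s. b i *\<^sub>R k i x))"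
    and zb: "zb = (\<lambda>x. za x + \<tau> *\<^sub>R (\<Sum>i=1..s. b i *\<^sub>R l i x))"
  shows "B yb zb - B ya za = \<tau> *\<^sub>R (\<Sum>i=1..s. b i *\<^sub>R (B (Y i) (l i) + B (k i) (Z i)))"
proof -
  have B01: "B (\<lambda>x. 0) h = 0" if "h \<in> Sy" for h
    using Bs1[OF Sx0 that, of 0] by simp
  have B02: "B h (\<lambda>x. 0) = 0" if "h \<in> Sx" for h
    using Bs2[OF that Sy0, of 0] by simp
  have L1: "finite A \<Longrightarrow> (\<forall>i\<in>A. kk i \<in> Sx) \<Longrightarrow> h \<in> Sy \<Longrightarrow>
     (\<lambda>x. \<Sum>i\<in>A. c i *\<^sub>R kk i x) \<in> Sx \<and> B (\<lambda>x. \<Sum>i\<in>A. c i *\<^sub>R kk i x) h = (\<Sum>i\<in>A. c i *\<^sub>R B (kk i) h)"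
    for A :: "nat set" and kk and c :: "nat \<Rightarrow> real" and h
  proof (induction A rule: finite_induct)
    case empty then show ?case using Sx0 B01 by simp
  next
    case (insert i A)
    then show ?case using Sxa[OF Sxs] Ba1[OF Sxs _ insert(5)] Bs1[OF _ insert(5)] by simp
  qed
  have L2: "finite A \<Longrightarrow> (\<forall>i\<in>A. kk i \<in> Sy) \<Longrightarrow> h \<in> Sx \<Longrightarrow>
     (\<lambda>x. \<Sum>i\<in>A. c i *\<^sub>R kk i x) \<in> Sy \<and> B h (\<lambda>x. \<Sum>i\<in>A. c i *\<^sub>R kk i x) = (\<Sum>i\<in>A. c i *\<^sub>R B h (kk i))"
    for A :: "nat set" and kk and c :: "nat \<Rightarrow> real" and h
  proof (induction A rule: finite_induct)
    case empty then show ?case using Sy0 B02 by simp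
  next
    case (insert i A)
    then show ?case using Sya[OF Sys] Ba2[OF insert(5) Sys] Bs2[OF insert(5)] by simp
  qed
  have fin: "finite {1..s::nat}" by simp
  define M where "M i j = B (k i) (l j)" for i j
  define Kb where "Kb = (\<lambda>x. \<Sum>i=1..s. b i *\<^sub>R k i x)"
  define Lb where "Lb = (\<lambda>x. \<Sum>i=1..s. b i *\<^sub>R l i x)"
  have Kb: "Kb \<in> Sx" "B Kb h = (\<Sum>i=1..s. b i *\<^sub>R B (k i) h)" if "h \<in> Sy" for h
    unfolding Kb_def using L1[OF fin ballI[OF k] that, where c=b] by auto
  have Lb: "Lb \<in> Sy" "B h Lb = (\<Sum>i=1..s. b i *\<^sub>R B h (l i))" if "h \<in> Sx" for h
    unfolding Lb_def using L2[OF fin ballI[OF l] that, where c=b] by auto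
  have Ka: "(\<lambda>x. \<Sum>j=1..s. a i j *\<^sub>R k j x) \<in> Sx"
      "B (\<lambda>x. \<Sum>j=1..s. a i j *\<^sub>R k j x) h = (\<Sum>j=1..s. a i j *\<^sub>R B (k j) h)" if "h \<in> Sy" for h i
    using L1[OF fin ballI[OF k] that, where c="a i"] by auto
  have La: "(\<lambda>x. \<Sum>j=1..s. a i j *\<^sub>R l j x) \<in> Sy"
      "B h (\<lambda>x. \<Sum>j=1..s. a i j *\<^sub>R l j x) = (\<Sum>j=1..s. a i j *\<^sub>R B h (l j))" if "h \<in> Sx" for h i
    using L2[OF fin ballI[OF l] that, where c="a i"] by auto
  have KbS: "Kb \<in> Sx" using Kb(1)[OF Sy0] .
  have LbS: "Lb \<in> Sy" using Lb(1)[OF Sx0] .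
  have yb': "yb = (\<lambda>x. ya x + \<tau> *\<^sub>R Kb x)" unfolding yb Kb_def by simp
  have zb': "zb = (\<lambda>x. za x + \<tau> *\<^sub>R Lb x)" unfolding zb Lb_def by simp
  have z1S: "zb \<in> Sy" unfolding zb' by (intro Sya za Sys LbS)
  have "B yb zb = B ya zb + \<tau> *\<^sub>R B Kb zb"
    unfolding yb' using Ba1[OF ya Sxs[OF KbS] z1S] Bs1[OF KbS z1S] by simp
  also have "B ya zb = B ya za + \<tau> *\<^sub>R (\<Sum>i=1..s. b i *\<^sub>R B ya (l i))"
    unfolding zb' using Ba2[OF ya za Sys[OF LbS]] Bs2[OF ya LbS] Lb(2)[OF ya] by simp
  also have "B Kb zb = (\<Sum>i=1..s. b i *\<^sub>R B (k i) za) + \<tau> *\<^sub>R (\<Sum>i=1..s. \<Sum>j=1..s. (b i * b j) *\<^sub>R M i j)"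
  proof -
    have "B Kb zb = B Kb za + \<tau> *\<^sub>R B Kb Lb"
      unfolding zb' using Ba2[OF KbS za Sys[OF LbS]] Bs2[OF KbS LbS] by simp
    also have "B Kb za = (\<Sum>i=1..s. b i *\<^sub>R B (k i) za)" using Kb(2)[OF za] .
    also have "B Kb Lb = (\<Sum>i=1..s. b i *\<^sub>R B (k i) Lb)" using Kb(2)[OF LbS] .
    also have "\<dots> = (\<Sum>i=1..s. \<Sum>j=1..s. (b i * b j) *\<^sub>R M i j)"
      unfolding M_def using Lb(2) k by (simp add: scaleR_sum_right)
    finally show ?thesis .
  qed
  finally have lhs: "B yb zb - B ya za = \<tau> *\<^sub>R (\<Sum>i=1..s. b i *\<^sub>R B ya (l i)) + \<tau> *\<^sub>R (\<Sum>i=1..s. b i *\<^sub>R B (k i) za)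
      + (\<tau>*\<tau>) *\<^sub>R (\<Sum>i=1..s. \<Sum>j=1..s. (b i * b j) *\<^sub>R M i j)"
    by (simp add: scaleR_add_right)
  have BY: "B (Y i) (l i) = B ya (l i) + \<tau> *\<^sub>R (\<Sum>j=1..s. a i j *\<^sub>R M j i)" if "i \<in> {1..s}" for i
    unfolding Y[OF that] M_def
    using Ba1[OF ya Sxs[OF Ka(1)[OF Sy0]] l[OF that]] Bs1[OF Ka(1)[OF Sy0] l[OF that]] Ka(2)[OF l[OF that]]
    by simp
  have BZ: "B (k i) (Z i) = B (k i) za + \<tau> *\<^sub>R (\<Sum>j=1..s. a i j *\<^sub>R M i j)" if "i \<in> {1..s}" for i
    unfolding Z[OF that] M_def
    using Ba2[OF k[OF that] za Sys[OF La(1)[OF Sx0]]] Bs2[OF k[OF that] La(1)[OF Sx0]] La(2)[OF k[OF that]]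
    by simp
  have "\<tau> *\<^sub>R (\<Sum>i=1..s. b i *\<^sub>R (B (Y i) (l i) + B (k i) (Z i)))
     = \<tau> *\<^sub>R (\<Sum>i=1..s. b i *\<^sub>R ((B ya (l i) + \<tau> *\<^sub>R (\<Sum>j=1..s. a i j *\<^sub>R M j i))
        + (B (k i) za + \<tau> *\<^sub>R (\<Sum>j=1..s. a i j *\<^sub>R M i j))))"
    using BY BZ by simp
  also have "\<dots> = B yb zb - B ya za"
    unfolding lhs by (rule rk_alg[OF sympl, symmetric])
  finally show ?thesis by simp
qed

lemma pw_E:
  fixes e le l2e :: complex and nn eps :: real
  defines "k \<equiv> \<i> * (le - complex_of_real (eps^2) * l2e - complex_of_real nn * e)"
  shows "(le * cnj k + k * cnj le) - complex_of_real (eps^2) * (l2e * cnj k + k * cnj l2e)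
       = complex_of_real (nn * (2 * Re (cnj e * k)))"
  unfolding k_def by (simp add: complex_eq_iff algebra_simps power2_eq_square)

lemma pw_mass:
  fixes e le l2e :: complex and nn eps :: real
  defines "k \<equiv> \<i> * (le - complex_of_real (eps^2) * l2e - complex_of_real nn * e)"
  shows "e * cnj k + k * cnj e = \<i> * (le * cnj e - e * cnj le) - \<i> * complex_of_real (eps^2) * (l2e * cnj e - e * cnj l2e)"
  unfolding k_def by (simp add: complex_eq_iff algebra_simps power2_eq_square)

abbreviation "IL L F \<equiv> integral (cbox 0 L) F"

lemma SA:
  fixes f g :: "real^'n::finite \<Rightarrow> complex"
  assumes f: "admissible L f" and g: "admissible L g" and Lpos: "\<And>i. L$i > 0"
  shows "IL L (\<lambda>x. lap f x * cnj (g x)) = IL L (\<lambda>x. f x * cnj (lap g x))"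
  using ibp_lap[OF f adm_cnj[OF g] Lpos] lap_cnj[OF g] by simp

lemma int_add: "continuous_on UNIV f \<Longrightarrow> continuous_on UNIV g \<Longrightarrow>
    IL L (\<lambda>x. f x + g x) = IL L f + IL L (g::real^'n::finite \<Rightarrow> 'b::banach)"
  by (intro integral_add cont_int)

lemma int_diff: "continuous_on UNIV f \<Longrightarrow> continuous_on UNIV g \<Longrightarrow>
    IL L (\<lambda>x. f x - g x) = IL L f - IL L (g::real^'n::finite \<Rightarrow> 'b::banach)"
  by (intro integral_diff cont_int)

lemma int_of_real: "continuous_on UNIV f \<Longrightarrow>
    IL L (\<lambda>x. complex_of_real (f x)) = complex_of_real (IL L (f::real^'n::finite \<Rightarrow> real))"
  by (rule integral_unique[OF has_integral_of_real[OF integrable_integral[OF cont_int]]])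

lemma K1_adm: "admissible L E \<Longrightarrow> admissible L N \<Longrightarrow> admissible L (K1 \<epsilon> E N)"
  unfolding K1_def by (intro adm_cmult adm_diff adm_lap adm_mult adm_of_real)

lemma K4_cont: "admissible L E \<Longrightarrow> admissible L N \<Longrightarrow> continuous_on UNIV (K4 \<epsilon> E N)"
  unfolding K4_def using adm_cont[OF K1_adm, of L E N \<epsilon>] adm_cont[of L E]
  by (auto intro!: continuous_intros)

lemma st_mass:
  fixes E :: "real^'n::finite \<Rightarrow> complex" and N :: "real^'n \<Rightarrow> real"
  assumes E: "admissible L E" and N: "admissible L N" and Lpos: "\<And>i. L$i > 0"
  shows "ipc L E (K1 \<epsilon> E N) + ipc L (K1 \<epsilon> E N) E = 0"
proof -
  define k where "k = K1 \<epsilon> E N"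
  have ak: "admissible L k" unfolding k_def by (rule K1_adm[OF E N])
  have c: "continuous_on UNIV E" "continuous_on UNIV (lap E)" "continuous_on UNIV (lap (lap E))"
      "continuous_on UNIV k"
    using adm_cont[OF E] adm_cont[OF adm_lap[OF E]] adm_cont[OF adm_lap[OF adm_lap[OF E]]] adm_cont[OF ak]
    by auto
  have "ipc L E k + ipc L k E = IL L (\<lambda>x. E x * cnj (k x) + k x * cnj (E x))"
    unfolding ipc_def using c by (subst int_add) (auto intro!: continuous_intros)
  also have "\<dots> = IL L (\<lambda>x. \<i> * (lap E x * cnj (E x) - E x * cnj (lap E x))
        - \<i> * complex_of_real (\<epsilon>^2) * (lap (lap E) x * cnj (E x) - E x * cnj (lap (lap E) x)))"
    unfolding k_def K1_def by (rule arg_cong[where f="IL L"], rule ext, rule pw_mass)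
  also have "\<dots> = \<i> * (IL L (\<lambda>x. lap E x * cnj (E x)) - IL L (\<lambda>x. E x * cnj (lap E x)))
        - \<i> * complex_of_real (\<epsilon>^2) * (IL L (\<lambda>x. lap (lap E) x * cnj (E x)) - IL L (\<lambda>x. E x * cnj (lap (lap E) x)))"
    using c by (simp add: int_diff int_add continuous_intros)
  also have "\<dots> = 0"
    using SA[OF E E Lpos] SA[OF adm_lap[OF E] E Lpos] SA[OF E adm_lap[OF E] Lpos] by simp
  finally show ?thesis unfolding k_def .
qed

lemma st_E:
  fixes E :: "real^'n::finite \<Rightarrow> complex" and N :: "real^'n \<Rightarrow> real"
  assumes E: "admissible L E" and N: "admissible L N" and Lpos: "\<And>i. L$i > 0"
  shows "ipc L (lap E) (K1 \<epsilon> E N) + ipc L (lap (K1 \<epsilon> E N)) E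
     - complex_of_real (\<epsilon>^2) * (ipc L (lap E) (lap (K1 \<epsilon> E N)) + ipc L (lap (K1 \<epsilon> E N)) (lap E))
     = complex_of_real (ipr L N (K4 \<epsilon> E N))"
proof -
  define k where "k = K1 \<epsilon> E N"
  have ak: "admissible L k" unfolding k_def by (rule K1_adm[OF E N])
  have c: "continuous_on UNIV E" "continuous_on UNIV (lap E)" "continuous_on UNIV (lap (lap E))"
      "continuous_on UNIV k" "continuous_on UNIV N" "continuous_on UNIV (K4 \<epsilon> E N)"
    using adm_cont[OF E] adm_cont[OF adm_lap[OF E]] adm_cont[OF adm_lap[OF adm_lap[OF E]]] adm_cont[OF ak]
      adm_cont[OF N] K4_cont[OF E N]
    by auto
  have "ipc L (lap E) k + ipc L (lap k) E
     - complex_of_real (\<epsilon>^2) * (ipc L (lap E) (lap k) + ipc L (lap k) (lap E))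
     = IL L (\<lambda>x. lap E x * cnj (k x)) + IL L (\<lambda>x. k x * cnj (lap E x))
     - complex_of_real (\<epsilon>^2) * (IL L (\<lambda>x. lap (lap E) x * cnj (k x)) + IL L (\<lambda>x. k x * cnj (lap (lap E) x)))"
    unfolding ipc_def
    using SA[OF ak E Lpos] SA[OF adm_lap[OF E] ak Lpos] SA[OF ak adm_lap[OF E] Lpos] by simp
  also have "\<dots> = IL L (\<lambda>x. (lap E x * cnj (k x) + k x * cnj (lap E x))
      - complex_of_real (\<epsilon>^2) * (lap (lap E) x * cnj (k x) + k x * cnj (lap (lap E) x)))"
    using c by (simp add: int_diff int_add continuous_intros)
  also have "\<dots> = IL L (\<lambda>x. complex_of_real (N x * K4 \<epsilon> E N x))"
    unfolding k_def K4_def K1_def by (rule arg_cong[where f="IL L"], rule ext, rule pw_E)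
  also have "\<dots> = complex_of_real (ipr L N (K4 \<epsilon> E N))"
    unfolding ipr_def using c by (intro int_of_real continuous_intros)
  finally show ?thesis unfolding k_def .
qed

lemma st_R:
  fixes N V Q k4 :: "real^'n::finite \<Rightarrow> real"
  assumes N: "admissible L N" and V: "admissible L V" and Q: "admissible L Q"
    and k4: "continuous_on UNIV k4" and Lpos: "\<And>i. L$i > 0"
  shows "- (1/2) * (ipr L N (K2 V) + ipr L (K2 V) N)
     + \<epsilon>^2/2 * (ipr L (lap N) (K2 V) + ipr L (lap (K2 V)) N)
     - (ipr L N k4 + ipr L (K2 V) Q)
     + 1/2 * (ipr L (lap V) (K3 \<epsilon> N Q) + ipr L (lap (K3 \<epsilon> N Q)) V)
     = - ipr L N k4"
proof -
  define k2 where "k2 = K2 V"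
  define k3 where "k3 = K3 \<epsilon> N Q"
  have a2: "admissible L k2" unfolding k2_def K2_def by (rule adm_lap[OF V])
  have a3: "admissible L k3" unfolding k3_def K3_def
    by (intro adm_add adm_diff adm_cmult adm_lap N Q)
  have c: "continuous_on UNIV N" "continuous_on UNIV (lap N)" "continuous_on UNIV V" "continuous_on UNIV (lap V)"
     "continuous_on UNIV Q" "continuous_on UNIV k2" "continuous_on UNIV k3"
    using adm_cont[OF N] adm_cont[OF adm_lap[OF N]] adm_cont[OF V] adm_cont[OF adm_lap[OF V]]
      adm_cont[OF Q] adm_cont[OF a2] adm_cont[OF a3] by auto
  have e1: "IL L (\<lambda>x. lap k2 x * N x) = IL L (\<lambda>x. lap N x * k2 x)"
    using ibp_lap[OF a2 N Lpos] by (simp add: mult.commute)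
  have e2: "IL L (\<lambda>x. lap k3 x * V x) = IL L (\<lambda>x. lap V x * k3 x)"
    using ibp_lap[OF a3 V Lpos] by (simp add: mult.commute)
  have e3: "IL L (\<lambda>x. k2 x * N x) = IL L (\<lambda>x. N x * k2 x)"
    by (simp add: mult.commute)
  have "- (1/2) * (ipr L N k2 + ipr L k2 N)
     + \<epsilon>^2/2 * (ipr L (lap N) k2 + ipr L (lap k2) N)
     - (ipr L N k4 + ipr L k2 Q)
     + 1/2 * (ipr L (lap V) k3 + ipr L (lap k3) V)
     = - IL L (\<lambda>x. N x * k2 x) + \<epsilon>^2 * IL L (\<lambda>x. lap N x * k2 x)
     - (IL L (\<lambda>x. N x * k4 x) + IL L (\<lambda>x. k2 x * Q x)) + IL L (\<lambda>x. lap V x * k3 x)"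
    unfolding ipr_def e1 e2 e3 by simp
  also have "\<dots> = IL L (\<lambda>x. - (N x * k2 x) + \<epsilon>^2 * (lap N x * k2 x)
     - (N x * k4 x + k2 x * Q x) + lap V x * k3 x)"
    using c k4 by (simp add: int_diff int_add continuous_intros)
  also have "\<dots> = IL L (\<lambda>x. - (N x * k4 x))"
    unfolding k2_def k3_def K2_def K3_def
    by (rule arg_cong[where f="IL L"], rule ext) (simp add: algebra_simps power2_eq_square)
  also have "\<dots> = - ipr L N k4" unfolding ipr_def by simp
  finally show ?thesis unfolding k2_def k3_def .
qed

lemma ipc_add1: "continuous_on UNIV f \<Longrightarrow> continuous_on UNIV g \<Longrightarrow> continuous_on UNIV h \<Longrightarrow>
  ipc L (\<lambda>x. f x + g x) h = ipc L f h + ipc L g h"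
  unfolding ipc_def by (simp add: distrib_right int_add continuous_intros)
lemma ipc_add2: "continuous_on UNIV f \<Longrightarrow> continuous_on UNIV g \<Longrightarrow> continuous_on UNIV h \<Longrightarrow>
  ipc L h (\<lambda>x. f x + g x) = ipc L h f + ipc L h g"
  unfolding ipc_def by (simp add: distrib_left int_add continuous_intros)
lemma ipc_sc1: "ipc L (\<lambda>x. c *\<^sub>R f x) h = c *\<^sub>R ipc L f h"
  unfolding ipc_def by simp
lemma ipc_sc2: "ipc L h (\<lambda>x. c *\<^sub>R f x) = c *\<^sub>R ipc L h f"
  unfolding ipc_def by simp
lemma ipr_add1: "continuous_on UNIV f \<Longrightarrow> continuous_on UNIV g \<Longrightarrow> continuous_on UNIV h \<Longrightarrow>
  ipr L (\<lambda>x. f x + g x) h = ipr L f h + ipr L g h"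
  unfolding ipr_def by (simp add: distrib_right int_add continuous_intros)
lemma ipr_add2: "continuous_on UNIV f \<Longrightarrow> continuous_on UNIV g \<Longrightarrow> continuous_on UNIV h \<Longrightarrow>
  ipr L h (\<lambda>x. f x + g x) = ipr L h f + ipr L h g"
  unfolding ipr_def by (simp add: distrib_left int_add continuous_intros)
lemma ipr_sc1: "ipr L (\<lambda>x. c *\<^sub>R f x) h = c *\<^sub>R ipr L f h"
proof -
  have "(\<lambda>x. c *\<^sub>R f x * h x) = (\<lambda>x. c * (f x * h x))" by auto
  then show ?thesis unfolding ipr_def by simp
qed
lemma ipr_sc2: "ipr L h (\<lambda>x. c *\<^sub>R f x) = c *\<^sub>R ipr L h f"
proof -
  have "(\<lambda>x. h x * (c *\<^sub>R f x)) = (\<lambda>x. c * (h x * f x))" by auto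
  then show ?thesis unfolding ipr_def by simp
qed

definition rkphi :: "real \<Rightarrow> (nat \<Rightarrow> real) \<Rightarrow> nat \<Rightarrow> (nat \<Rightarrow> 'w::real_vector) \<Rightarrow> 'w" where
  "rkphi \<tau> b s X = \<tau> *\<^sub>R (\<Sum>i=1..s. b i *\<^sub>R X i)"

lemma phi_add: "rkphi \<tau> b s X + rkphi \<tau> b s Y = rkphi \<tau> b s (\<lambda>i. X i + Y i)"
  unfolding rkphi_def by (simp add: sum.distrib scaleR_add_right)
lemma phi_diff: "rkphi \<tau> b s X - rkphi \<tau> b s Y = rkphi \<tau> b s (\<lambda>i. X i - Y i)"
  unfolding rkphi_def by (simp add: sum_subtractf scaleR_diff_right)
lemma phi_cmult: "c * rkphi \<tau> b s X = rkphi \<tau> b s (\<lambda>i. c * X i)"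
  for c :: "'w::real_algebra"
  unfolding rkphi_def by (simp add: sum_distrib_left mult_scaleR_right)
lemma phi_of_real: "of_real (rkphi \<tau> b s X) = rkphi \<tau> b s (\<lambda>i. (of_real (X i) :: 'w::real_algebra_1))"
  unfolding rkphi_def by (simp add: of_real_sum scaleR_conv_of_real)
lemma phi_zero: "(\<And>i. i \<in> {1..s} \<Longrightarrow> X i = 0) \<Longrightarrow> rkphi \<tau> b s X = 0"
  unfolding rkphi_def by simp

lemma cmod_sq_Re: "(cmod z)^2 = Re (z * cnj z)"
  using complex_norm_square[of z] by (metis Re_complex_of_real)

lemma mass_ipc: "mass L E = ipc L E E"
  unfolding mass_def ipc_def by (simp add: complex_norm_square[symmetric])

lemma bilA:
  fixes f g h :: "real^'n::finite \<Rightarrow> complex"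
  shows "admissible L f \<Longrightarrow> admissible L g \<Longrightarrow> admissible L h \<Longrightarrow>
    ipc L (lap (\<lambda>x. f x + g x)) h = ipc L (lap f) h + ipc L (lap g) h"
  and "admissible L f \<Longrightarrow> admissible L h \<Longrightarrow> ipc L (lap (\<lambda>x. c *\<^sub>R f x)) h = c *\<^sub>R ipc L (lap f) h"
  and "admissible L h \<Longrightarrow> admissible L f \<Longrightarrow> admissible L g \<Longrightarrow>
    ipc L (lap h) (\<lambda>x. f x + g x) = ipc L (lap h) f + ipc L (lap h) g"
  and "admissible L h \<Longrightarrow> admissible L f \<Longrightarrow> ipc L (lap h) (\<lambda>x. c *\<^sub>R f x) = c *\<^sub>R ipc L (lap h) f"
  by (auto simp: lap_add lap_scaleR ipc_sc1 ipc_sc2 intro!: ipc_add1 ipc_add2 adm_cont adm_lap)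

lemma bilB:
  fixes f g h :: "real^'n::finite \<Rightarrow> complex"
  shows "admissible L f \<Longrightarrow> admissible L g \<Longrightarrow> admissible L h \<Longrightarrow>
    ipc L (lap (\<lambda>x. f x + g x)) (lap h) = ipc L (lap f) (lap h) + ipc L (lap g) (lap h)"
  and "admissible L f \<Longrightarrow> admissible L h \<Longrightarrow> ipc L (lap (\<lambda>x. c *\<^sub>R f x)) (lap h) = c *\<^sub>R ipc L (lap f) (lap h)"
  and "admissible L h \<Longrightarrow> admissible L f \<Longrightarrow> admissible L g \<Longrightarrow>
    ipc L (lap h) (lap (\<lambda>x. f x + g x)) = ipc L (lap h) (lap f) + ipc L (lap h) (lap g)"
  and "admissible L h \<Longrightarrow> admissible L f \<Longrightarrow> ipc L (lap h) (lap (\<lambda>x. c *\<^sub>R f x)) = c *\<^sub>R ipc L (lap h) (lap f)"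
  by (auto simp: lap_add lap_scaleR ipc_sc1 ipc_sc2 intro!: ipc_add1 ipc_add2 adm_cont adm_lap)

lemma bilC:
  fixes f g h :: "real^'n::finite \<Rightarrow> real"
  shows "continuous_on UNIV f \<Longrightarrow> continuous_on UNIV g \<Longrightarrow> continuous_on UNIV h \<Longrightarrow>
    ipr L (\<lambda>x. f x + g x) h = ipr L f h + ipr L g h"
  and "continuous_on UNIV f \<Longrightarrow> continuous_on UNIV h \<Longrightarrow> ipr L (\<lambda>x. c *\<^sub>R f x) h = c *\<^sub>R ipr L f h"
  and "continuous_on UNIV h \<Longrightarrow> continuous_on UNIV f \<Longrightarrow> continuous_on UNIV g \<Longrightarrow>
    ipr L h (\<lambda>x. f x + g x) = ipr L h f + ipr L h g"
  and "continuous_on UNIV h \<Longrightarrow> continuous_on UNIV f \<Longrightarrow> ipr L h (\<lambda>x. c *\<^sub>R f x) = c *\<^sub>R ipr L h f"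
  using ipr_sc1[of L c f h] ipr_sc2[of L h c f]
  by (auto simp del: real_scaleR_def intro!: ipr_add1 ipr_add2)

lemma bilD:
  fixes f g h :: "real^'n::finite \<Rightarrow> real"
  shows "admissible L f \<Longrightarrow> admissible L g \<Longrightarrow> admissible L h \<Longrightarrow>
    ipr L (lap (\<lambda>x. f x + g x)) h = ipr L (lap f) h + ipr L (lap g) h"
  and "admissible L f \<Longrightarrow> admissible L h \<Longrightarrow> ipr L (lap (\<lambda>x. c *\<^sub>R f x)) h = c *\<^sub>R ipr L (lap f) h"
  and "admissible L h \<Longrightarrow> admissible L f \<Longrightarrow> admissible L g \<Longrightarrow>
    ipr L (lap h) (\<lambda>x. f x + g x) = ipr L (lap h) f + ipr L (lap h) g"
  and "admissible L h \<Longrightarrow> admissible L f \<Longrightarrow> ipr L (lap h) (\<lambda>x. c *\<^sub>R f x) = c *\<^sub>R ipr L (lap h) f"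
  using ipr_sc1[of L c "lap f" h] ipr_sc2[of L "lap h" c f]
  by (auto simp: lap_add lap_scaleR simp del: real_scaleR_def intro!: ipr_add1 ipr_add2 adm_cont adm_lap)

lemma comb:
  fixes A B :: complex and c :: complex and P C1 D1 C2 D2 d :: real
  assumes "A - c * B = of_real P" and "- (1/2) * C1 + d * D1 - C2 + 1/2 * D2 = - P"
  shows "A - c * B - of_real (1/2 * C1) + of_real (d * D1) - of_real C2 + of_real (1/2 * D2) = 0"
proof -
  have "of_real (- (1/2) * C1 + d * D1 - C2 + 1/2 * D2) = (of_real (- P) :: complex)"
    using assms(2) by simp
  then have "A - c * B - of_real (1/2 * C1) + of_real (d * D1) - of_real C2 + of_real (1/2 * D2)
      = (A - c * B) + of_real (- P)"
    by (simp add: algebra_simps)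
  then show ?thesis using assms(1) by simp
qed

lemma one_step:
  fixes L :: "real^'d::finite" and \<epsilon> \<tau> :: real and s :: nat
    and a :: "nat \<Rightarrow> nat \<Rightarrow> real" and b :: "nat \<Rightarrow> real"
    and E0 E1 :: "real^'d \<Rightarrow> complex" and N0 N1 v0 v1 q0 q1 :: "real^'d \<Rightarrow> real"
    and Es :: "nat \<Rightarrow> real^'d \<Rightarrow> complex" and Ns Vs Qs :: "nat \<Rightarrow> real^'d \<Rightarrow> real"
  assumes Lpos: "\<And>i. L$i > 0"
    and sympl: "\<forall>i\<in>{1..s}. \<forall>j\<in>{1..s}. b i * a i j + b j * a j i = b i * b j"
    and aE0: "admissible L E0" and aN0: "admissible L N0" and av0: "admissible L v0" and aq0: "admissible L q0"
    and admS: "\<And>i. i\<in>{1..s} \<Longrightarrow> admissible L (Es i) \<and> admissible L (Ns i) \<and> admissible L (Vs i) \<and> admissible L (Qs i)"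
    and sE: "\<forall>i\<in>{1..s}. Es i = (\<lambda>x. E0 x + complex_of_real \<tau> *
                     (\<Sum>j=1..s. complex_of_real (a i j) * K1 \<epsilon> (Es j) (Ns j) x))"
    and sN: "\<forall>i\<in>{1..s}. Ns i = (\<lambda>x. N0 x + \<tau> * (\<Sum>j=1..s. a i j * K2 (Vs j) x))"
    and sV: "\<forall>i\<in>{1..s}. Vs i = (\<lambda>x. v0 x + \<tau> * (\<Sum>j=1..s. a i j * K3 \<epsilon> (Ns j) (Qs j) x))"
    and sQ: "\<forall>i\<in>{1..s}. Qs i = (\<lambda>x. q0 x + \<tau> * (\<Sum>j=1..s. a i j * K4 \<epsilon> (Es j) (Ns j) x))"
    and uE: "E1 = (\<lambda>x. E0 x + complex_of_real \<tau> *
                     (\<Sum>i=1..s. complex_of_real (b i) * K1 \<epsilon> (Es i) (Ns i) x))"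
    and uN: "N1 = (\<lambda>x. N0 x + \<tau> * (\<Sum>i=1..s. b i * K2 (Vs i) x))"
    and uv: "v1 = (\<lambda>x. v0 x + \<tau> * (\<Sum>i=1..s. b i * K3 \<epsilon> (Ns i) (Qs i) x))"
    and uq: "q1 = (\<lambda>x. q0 x + \<tau> * (\<Sum>i=1..s. b i * K4 \<epsilon> (Es i) (Ns i) x))"
  shows "\<forall>x. q1 x - (cmod (E1 x))^2 = q0 x - (cmod (E0 x))^2"
    and "mass L E1 = mass L E0"
    and "energy \<epsilon> L E1 N1 v1 q1 = energy \<epsilon> L E0 N0 v0 q0"
proof -
  define k1 where "k1 = (\<lambda>i. K1 \<epsilon> (Es i) (Ns i))"
  define k2 where "k2 = (\<lambda>i. K2 (Vs i))"
  define k3 where "k3 = (\<lambda>i. K3 \<epsilon> (Ns i) (Qs i))"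
  define k4 where "k4 = (\<lambda>i. K4 \<epsilon> (Es i) (Ns i))"
  have aE: "admissible L (Es i)" and aN: "admissible L (Ns i)" and aV: "admissible L (Vs i)"
    and aQ: "admissible L (Qs i)" if "i \<in> {1..s}" for i
    using admS[OF that] by auto
  have ak1: "admissible L (k1 i)" if "i \<in> {1..s}" for i
    unfolding k1_def by (rule K1_adm[OF aE[OF that] aN[OF that]])
  have ak2: "admissible L (k2 i)" if "i \<in> {1..s}" for i
    unfolding k2_def K2_def by (rule adm_lap[OF aV[OF that]])
  have ak3: "admissible L (k3 i)" if "i \<in> {1..s}" for i
    unfolding k3_def K3_def by (intro adm_add adm_diff adm_cmult adm_lap aN aQ that)
  have ck4: "continuous_on UNIV (k4 i)" if "i \<in> {1..s}" for i
    unfolding k4_def by (rule K4_cont[OF aE[OF that] aN[OF that]])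
  have sE': "Es i = (\<lambda>x. E0 x + \<tau> *\<^sub>R (\<Sum>j=1..s. a i j *\<^sub>R k1 j x))" if "i \<in> {1..s}" for i
    using sE that by (simp add: scaleR_conv_of_real k1_def)
  have sN': "Ns i = (\<lambda>x. N0 x + \<tau> *\<^sub>R (\<Sum>j=1..s. a i j *\<^sub>R k2 j x))" if "i \<in> {1..s}" for i
    using sN that by (simp add: k2_def)
  have sV': "Vs i = (\<lambda>x. v0 x + \<tau> *\<^sub>R (\<Sum>j=1..s. a i j *\<^sub>R k3 j x))" if "i \<in> {1..s}" for i
    using sV that by (simp add: k3_def)
  have sQ': "Qs i = (\<lambda>x. q0 x + \<tau> *\<^sub>R (\<Sum>j=1..s. a i j *\<^sub>R k4 j x))" if "i \<in> {1..s}" for i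
    using sQ that by (simp add: k4_def)
  have uE': "E1 = (\<lambda>x. E0 x + \<tau> *\<^sub>R (\<Sum>i=1..s. b i *\<^sub>R k1 i x))"
    using uE by (simp add: scaleR_conv_of_real k1_def)
  have uN': "N1 = (\<lambda>x. N0 x + \<tau> *\<^sub>R (\<Sum>i=1..s. b i *\<^sub>R k2 i x))"
    using uN by (simp add: k2_def)
  have uv': "v1 = (\<lambda>x. v0 x + \<tau> *\<^sub>R (\<Sum>i=1..s. b i *\<^sub>R k3 i x))"
    using uv by (simp add: k3_def)
  have uq': "q1 = (\<lambda>x. q0 x + \<tau> *\<^sub>R (\<Sum>i=1..s. b i *\<^sub>R k4 i x))"
    using uq by (simp add: k4_def)

  show "\<forall>x. q1 x - (cmod (E1 x))^2 = q0 x - (cmod (E0 x))^2"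
  proof
    fix x0
    have "Re (E1 x0 * cnj (E1 x0)) - Re (E0 x0 * cnj (E0 x0))
       = \<tau> *\<^sub>R (\<Sum>i=1..s. b i *\<^sub>R (Re (Es i x0 * cnj (k1 i x0)) + Re (k1 i x0 * cnj (Es i x0))))"
      apply (rule rk_bil[where B="\<lambda>f g. Re (f x0 * cnj (g x0))" and Sx=UNIV and Sy=UNIV
            and ya=E0 and za=E0 and k=k1 and l=k1 and Y=Es and Z=Es, OF _ _ _ _ _ _ _ _ _ _ _ _ _ _ sympl sE' sE' uE' uE'])
      apply (auto simp: algebra_simps)
      done
    also have "\<dots> = \<tau> *\<^sub>R (\<Sum>i=1..s. b i *\<^sub>R k4 i x0)"
      unfolding k4_def K4_def k1_def by (simp add: algebra_simps)
    finally show "q1 x0 - (cmod (E1 x0))^2 = q0 x0 - (cmod (E0 x0))^2"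
      unfolding cmod_sq_Re uq' by simp
  qed

  have cE0: "continuous_on UNIV E0" "continuous_on UNIV N0" "continuous_on UNIV q0"
    using adm_cont[OF aE0] adm_cont[OF aN0] adm_cont[OF aq0] by auto
  have cN: "continuous_on UNIV (Ns i)" "continuous_on UNIV (Qs i)" "continuous_on UNIV (k2 i)"
    if "i \<in> {1..s}" for i
    using adm_cont[OF aN[OF that]] adm_cont[OF aQ[OF that]] adm_cont[OF ak2[OF that]] by auto

  show "mass L E1 = mass L E0"
  proof -
    have "ipc L E1 E1 - ipc L E0 E0 = \<tau> *\<^sub>R (\<Sum>i=1..s. b i *\<^sub>R (ipc L (Es i) (k1 i) + ipc L (k1 i) (Es i)))"
      apply (rule rk_bil[where B="ipc L" and Sx="{f. admissible L f}" and Sy="{f. admissible L f}"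
            and ya=E0 and za=E0 and k=k1 and l=k1 and Y=Es and Z=Es, OF _ _ _ _ _ _ _ _ _ _ _ _ _ _ sympl sE' sE' uE' uE'])
      apply (auto intro: adm_add adm_scaleR adm_const aE0 ak1 ipc_add1 ipc_add2 adm_cont simp: ipc_sc1 ipc_sc2)
      done
    also have "(\<Sum>i=1..s. b i *\<^sub>R (ipc L (Es i) (k1 i) + ipc L (k1 i) (Es i))) = 0"
      by (rule sum.neutral) (auto simp: k1_def st_mass[OF aE aN Lpos])
    finally show ?thesis unfolding mass_ipc by simp
  qed

  have DA: "ipc L (lap E1) E1 - ipc L (lap E0) E0
     = rkphi \<tau> b s (\<lambda>i. ipc L (lap (Es i)) (k1 i) + ipc L (lap (k1 i)) (Es i))"
    unfolding rkphi_def
    apply (rule rk_bil[where B="\<lambda>f g. ipc L (lap f) g" and Sx="{f. admissible L f}" and Sy="{f. admissible L f}"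
          and ya=E0 and za=E0 and k=k1 and l=k1 and Y=Es and Z=Es, OF _ _ _ _ _ _ _ _ _ _ _ _ _ _ sympl sE' sE' uE' uE'])
    apply (auto intro: adm_add adm_scaleR adm_const aE0 ak1 simp: bilA)
    done
  have DB: "ipc L (lap E1) (lap E1) - ipc L (lap E0) (lap E0)
     = rkphi \<tau> b s (\<lambda>i. ipc L (lap (Es i)) (lap (k1 i)) + ipc L (lap (k1 i)) (lap (Es i)))"
    unfolding rkphi_def
    apply (rule rk_bil[where B="\<lambda>f g. ipc L (lap f) (lap g)" and Sx="{f. admissible L f}" and Sy="{f. admissible L f}"
          and ya=E0 and za=E0 and k=k1 and l=k1 and Y=Es and Z=Es, OF _ _ _ _ _ _ _ _ _ _ _ _ _ _ sympl sE' sE' uE' uE'])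
    apply (auto intro: adm_add adm_scaleR adm_const aE0 ak1 simp: bilB)
    done
  have DC1: "ipr L N1 N1 - ipr L N0 N0
     = rkphi \<tau> b s (\<lambda>i. ipr L (Ns i) (k2 i) + ipr L (k2 i) (Ns i))"
    unfolding rkphi_def
    apply (rule rk_bil[where B="ipr L" and Sx="{f. continuous_on UNIV f}" and Sy="{f. continuous_on UNIV f}"
          and ya=N0 and za=N0 and k=k2 and l=k2 and Y=Ns and Z=Ns, OF _ _ _ _ _ _ _ _ _ _ _ _ _ _ sympl sN' sN' uN' uN'])
    apply (auto intro!: continuous_intros cE0 cN simp: bilC simp del: real_scaleR_def)
    done
  have DC2: "ipr L N1 q1 - ipr L N0 q0
     = rkphi \<tau> b s (\<lambda>i. ipr L (Ns i) (k4 i) + ipr L (k2 i) (Qs i))"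
    unfolding rkphi_def
    apply (rule rk_bil[where B="ipr L" and Sx="{f. continuous_on UNIV f}" and Sy="{f. continuous_on UNIV f}"
          and ya=N0 and za=q0 and k=k2 and l=k4 and Y=Ns and Z=Qs, OF _ _ _ _ _ _ _ _ _ _ _ _ _ _ sympl sN' sQ' uN' uq'])
    apply (auto intro!: continuous_intros cE0 cN ck4 simp: bilC simp del: real_scaleR_def)
    done
  have DD1: "ipr L (lap N1) N1 - ipr L (lap N0) N0
     = rkphi \<tau> b s (\<lambda>i. ipr L (lap (Ns i)) (k2 i) + ipr L (lap (k2 i)) (Ns i))"
    unfolding rkphi_def
    apply (rule rk_bil[where B="\<lambda>f g. ipr L (lap f) g" and Sx="{f. admissible L f}" and Sy="{f. admissible L f}"
          and ya=N0 and za=N0 and k=k2 and l=k2 and Y=Ns and Z=Ns, OF _ _ _ _ _ _ _ _ _ _ _ _ _ _ sympl sN' sN' uN' uN'])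
    apply (auto intro: adm_add adm_scaleR adm_const aN0 ak2 simp: bilD simp del: real_scaleR_def)
    done
  have DD2: "ipr L (lap v1) v1 - ipr L (lap v0) v0
     = rkphi \<tau> b s (\<lambda>i. ipr L (lap (Vs i)) (k3 i) + ipr L (lap (k3 i)) (Vs i))"
    unfolding rkphi_def
    apply (rule rk_bil[where B="\<lambda>f g. ipr L (lap f) g" and Sx="{f. admissible L f}" and Sy="{f. admissible L f}"
          and ya=v0 and za=v0 and k=k3 and l=k3 and Y=Vs and Z=Vs, OF _ _ _ _ _ _ _ _ _ _ _ _ _ _ sympl sV' sV' uv' uv'])
    apply (auto intro: adm_add adm_scaleR adm_const av0 ak3 simp: bilD simp del: real_scaleR_def)
    done
  show "energy \<epsilon> L E1 N1 v1 q1 = energy \<epsilon> L E0 N0 v0 q0"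
  proof -
    have "energy \<epsilon> L E1 N1 v1 q1 - energy \<epsilon> L E0 N0 v0 q0
      = (ipc L (lap E1) E1 - ipc L (lap E0) E0)
        - complex_of_real (\<epsilon>^2) * (ipc L (lap E1) (lap E1) - ipc L (lap E0) (lap E0))
        - complex_of_real (1/2 * (ipr L N1 N1 - ipr L N0 N0))
        + complex_of_real (\<epsilon>^2/2 * (ipr L (lap N1) N1 - ipr L (lap N0) N0))
        - complex_of_real (ipr L N1 q1 - ipr L N0 q0)
        + complex_of_real (1/2 * (ipr L (lap v1) v1 - ipr L (lap v0) v0))"
      unfolding energy_def by (simp add: algebra_simps)
    also have "\<dots> = 0"
      unfolding DA DB DC1 DC2 DD1 DD2
      apply (simp only: phi_cmult phi_of_real phi_add phi_diff)
      apply (rule phi_zero)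
      subgoal for i
        unfolding k1_def k2_def k3_def k4_def
        by (rule comb[OF st_E[OF aE aN Lpos] st_R[OF aN aV aQ ck4[unfolded k4_def] Lpos]])
      done
    finally show ?thesis by simp
  qed
qed

theorem theorem3p1:
  fixes L :: "real^'d" and \<epsilon> \<tau> :: real and s :: nat
    and a :: "nat \<Rightarrow> nat \<Rightarrow> real" and b :: "nat \<Rightarrow> real"
    and E :: "nat \<Rightarrow> real^'d \<Rightarrow> complex"
    and N v q :: "nat \<Rightarrow> real^'d \<Rightarrow> real"
    and EE :: "nat \<Rightarrow> nat \<Rightarrow> real^'d \<Rightarrow> complex"
    and NN VV QQ :: "nat \<Rightarrow> nat \<Rightarrow> real^'d \<Rightarrow> real"
  assumes dim: "CARD('d) \<le> 2"
    and L_pos: "\<forall>k. L$k > 0"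
    and eps: "\<epsilon> > 0" and tau: "\<tau> > 0"
    and sympl: "\<forall>i\<in>{1..s}. \<forall>j\<in>{1..s}. b i * a i j + b j * a j i = b i * b j"
    and reg: "\<forall>n. admissible L (E n) \<and> admissible L (N n) \<and> admissible L (v n) \<and> admissible L (q n)"
    and reg_stage: "\<forall>n. \<forall>i\<in>{1..s}. admissible L (EE n i) \<and> admissible L (NN n i)
                        \<and> admissible L (VV n i) \<and> admissible L (QQ n i)"
    and stage_E: "\<forall>n. \<forall>i\<in>{1..s}. EE n i = (\<lambda>x. E n x + complex_of_real \<tau> *
                     (\<Sum>j=1..s. complex_of_real (a i j) * K1 \<epsilon> (EE n j) (NN n j) x))"
    and stage_N: "\<forall>n. \<forall>i\<in>{1..s}. NN n i = (\<lambda>x. N n x + \<tau> * (\<Sum>j=1..s. a i j * K2 (VV n j) x))"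
    and stage_v: "\<forall>n. \<forall>i\<in>{1..s}. VV n i = (\<lambda>x. v n x + \<tau> * (\<Sum>j=1..s. a i j * K3 \<epsilon> (NN n j) (QQ n j) x))"
    and stage_q: "\<forall>n. \<forall>i\<in>{1..s}. QQ n i = (\<lambda>x. q n x + \<tau> * (\<Sum>j=1..s. a i j * K4 \<epsilon> (EE n j) (NN n j) x))"
    and upd_E: "\<forall>n. E (Suc n) = (\<lambda>x. E n x + complex_of_real \<tau> *
                     (\<Sum>i=1..s. complex_of_real (b i) * K1 \<epsilon> (EE n i) (NN n i) x))"
    and upd_N: "\<forall>n. N (Suc n) = (\<lambda>x. N n x + \<tau> * (\<Sum>i=1..s. b i * K2 (VV n i) x))"
    and upd_v: "\<forall>n. v (Suc n) = (\<lambda>x. v n x + \<tau> * (\<Sum>i=1..s. b i * K3 \<epsilon> (NN n i) (QQ n i) x))"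
    and upd_q: "\<forall>n. q (Suc n) = (\<lambda>x. q n x + \<tau> * (\<Sum>i=1..s. b i * K4 \<epsilon> (EE n i) (NN n i) x))"
    and init: "q 0 = (\<lambda>x. (cmod (E 0 x))^2)"
  shows "\<forall>n. mass L (E (Suc n)) = mass L (E n)
            \<and> (\<lambda>x. q n x - (cmod (E n x))^2) = (\<lambda>x. 0)
            \<and> energy \<epsilon> L (E (Suc n)) (N (Suc n)) (v (Suc n)) (q (Suc n))
              = energy \<epsilon> L (E n) (N n) (v n) (q n)"
proof -
  have Lpos: "\<And>i. L$i > 0" using L_pos by blast
  have st: "(\<forall>x. q (Suc n) x - (cmod (E (Suc n) x))^2 = q n x - (cmod (E n x))^2)
      \<and> mass L (E (Suc n)) = mass L (E n)
      \<and> energy \<epsilon> L (E (Suc n)) (N (Suc n)) (v (Suc n)) (q (Suc n)) = energy \<epsilon> L (E n) (N n) (v n) (q n)" for n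
  proof -
    have r: "admissible L (E n)" "admissible L (N n)" "admissible L (v n)" "admissible L (q n)"
      using reg by blast+
    have rs: "\<And>i. i\<in>{1..s} \<Longrightarrow> admissible L (EE n i) \<and> admissible L (NN n i) \<and> admissible L (VV n i) \<and> admissible L (QQ n i)"
      using reg_stage by blast
    show ?thesis
      using one_step[OF Lpos sympl r(1) r(2) r(3) r(4) rs spec[OF stage_E, of n] spec[OF stage_N, of n]
          spec[OF stage_v, of n] spec[OF stage_q, of n] spec[OF upd_E, of n] spec[OF upd_N, of n]
          spec[OF upd_v, of n] spec[OF upd_q, of n]]
      by blast
  qed
  have qid: "(\<lambda>x. q n x - (cmod (E n x))^2) = (\<lambda>x. 0)" for n
  proof (induction n)
    case 0 then show ?case using init by simp
  next
    case (Suc n)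
    then show ?case using st[of n] by (simp add: fun_eq_iff)
  qed
  show ?thesis using st qid by blast
qed

end
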